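(* Let $\Omega$ be the closure of a bounded domain in $\mathbb{R}^d$ and let $X$ be a Banach space of functions on $\Omega$ with $C(\Omega)\subset X$ and $\|g\|_X\le C_X\|g\|_{C(\Omega)}$ for $g\in C(\Omega)$. Let $Y$ be a linear subspace of $C(\Omega)$ with norm $\|\cdot\|_Y$ such that $K:=U(Y)=\{g\in Y:\|g\|_Y\le1\}$ is a compact subset of $C(\Omega)$, and let $C_Y$ be such that $\|g\|_{C(\Omega)}\le C_Y$ for all $g\in K$. Let ${\bf x}=(x_1,\dots,x_m)\in\Omega^m$, $f\in K$, $w:=\lambda_{\bf x}(f)$, and assume $R(K_w)_X\neq0$. For $\mu>0$ define on $C(\Omega)$ $$\mathcal{L}_\mu(g):=\|\lambda_{\bf x}(g)-w\|+\mu\|g\|_Y .$$ Let $C>2$, and let $\mu>0$, $\delta>0$ satisfy $\delta\le\mu^2$ and $$C_X\varepsilon+2R(K(w,2\varepsilon))_X\le C\,R(K_w)_X,\qquad\varepsilon:=\mu\max(\mu+1,C_Y)$$ (this holds for all sufficiently small $\mu$). Let $\Sigma\subset C(\Omega)$ satisfy $\operatorname{dist}(K,\Sigma\cap K)_{C(\Omega)}<\delta$ and let $\hat f\in\mathop{\rm argmin}_{g\in\Sigma}\mathcal{L}_\mu(g)$ be any minimizer. Then $\|f-\hat f\|_X\le C\,R(K_w)_X$.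
   Context: Convention: $\|g\|_Y:=\infty$ if $g\notin Y$. $\lambda_{\bf x}(g):=(g(x_1),\dots,g(x_m))$; on $\mathbb{R}^m$, $\|v\|:=\big[\frac1m\sum_{j=1}^m|v_j|^2\big]^{1/2}$. For $A,B\subset C(\Omega)$, $\operatorname{dist}(A,B)_{C(\Omega)}:=\sup_{a\in A}\inf_{b\in B}\|a-b\|_{C(\Omega)}$. $K_{w'}:=\{h\in K:\lambda_{\bf x}(h)=w'\}$, $K(w,\varepsilon):=\bigcup_{w'\in\mathbb{R}^m,\ \|w'-w\|\le\varepsilon}K_{w'}$. For $S\subset X$, $R(S)_X:=\inf\{r:\ S\subset B(z,r)_X\text{ for some }z\in X\}$ (Chebyshev radius in $X$). *)

theory Defs
  imports "HOL-Analysis.Analysis"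
begin

text \<open>Functions on \<Omega> are represented as total functions on the ambient Euclidean
space that vanish outside \<Omega> (extensional convention).\<close>

definition on_set :: "'a set \<Rightarrow> ('a \<Rightarrow> real) set" where
  "on_set \<Omega> = {g. \<forall>x. x \<notin> \<Omega> \<longrightarrow> g x = 0}"

definition Cspace :: "'a::topological_space set \<Rightarrow> ('a \<Rightarrow> real) set" where
  "Cspace \<Omega> = {g. continuous_on \<Omega> g \<and> g \<in> on_set \<Omega>}"

definition cnorm :: "'a set \<Rightarrow> ('a \<Rightarrow> real) \<Rightarrow> real" where
  "cnorm \<Omega> g = (SUP x\<in>\<Omega>. \<bar>g x\<bar>)"

definition normed_fspace :: "'a set \<Rightarrow> ('a \<Rightarrow> real) set \<Rightarrow> (('a \<Rightarrow> real) \<Rightarrow> real) \<Rightarrow> bool" where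
  "normed_fspace \<Omega> V N \<longleftrightarrow>
     V \<subseteq> on_set \<Omega> \<and> (\<lambda>x. 0) \<in> V \<and>
     (\<forall>g\<in>V. \<forall>h\<in>V. (\<lambda>x. g x + h x) \<in> V) \<and>
     (\<forall>c. \<forall>g\<in>V. (\<lambda>x. c * g x) \<in> V) \<and>
     (\<forall>g\<in>V. N g \<ge> 0 \<and> (N g = 0 \<longleftrightarrow> g = (\<lambda>x. 0))) \<and>
     (\<forall>c. \<forall>g\<in>V. N (\<lambda>x. c * g x) = \<bar>c\<bar> * N g) \<and>
     (\<forall>g\<in>V. \<forall>h\<in>V. N (\<lambda>x. g x + h x) \<le> N g + N h)"

definition banach_fspace :: "'a set \<Rightarrow> ('a \<Rightarrow> real) set \<Rightarrow> (('a \<Rightarrow> real) \<Rightarrow> real) \<Rightarrow> bool" where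
  "banach_fspace \<Omega> V N \<longleftrightarrow> normed_fspace \<Omega> V N \<and>
     (\<forall>s. (\<forall>n. s n \<in> V) \<and> (\<forall>e>0. \<exists>M. \<forall>m\<ge>M. \<forall>n\<ge>M. N (\<lambda>x. s m x - s n x) < e) \<longrightarrow>
          (\<exists>l\<in>V. (\<lambda>n. N (\<lambda>x. s n x - l x)) \<longlonglongrightarrow> 0))"

definition enorm :: "('a \<Rightarrow> real) set \<Rightarrow> (('a \<Rightarrow> real) \<Rightarrow> real) \<Rightarrow> ('a \<Rightarrow> real) \<Rightarrow> ereal" where
  "enorm V N g = (if g \<in> V then ereal (N g) else \<infinity>)"

definition compact_in_C :: "'a::topological_space set \<Rightarrow> ('a \<Rightarrow> real) set \<Rightarrow> bool" where
  "compact_in_C \<Omega> S \<longleftrightarrow> S \<subseteq> Cspace \<Omega> \<and>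
     (\<forall>s::nat\<Rightarrow>'a\<Rightarrow>real. (\<forall>n. s n \<in> S) \<longrightarrow>
        (\<exists>l\<in>S. \<exists>r::nat\<Rightarrow>nat. strict_mono r \<and> (\<lambda>n. cnorm \<Omega> (\<lambda>x. s (r n) x - l x)) \<longlonglongrightarrow> 0))"

text \<open>Sampling operator and normalized Euclidean norm on R^m (vectors as nat \<Rightarrow> real, indices < m).\<close>
definition lam :: "(nat \<Rightarrow> 'a) \<Rightarrow> ('a \<Rightarrow> real) \<Rightarrow> nat \<Rightarrow> real" where
  "lam xs g = (\<lambda>j. g (xs j))"

definition vnorm :: "nat \<Rightarrow> (nat \<Rightarrow> real) \<Rightarrow> real" where
  "vnorm m v = sqrt ((1 / real m) * (\<Sum>j<m. \<bar>v j\<bar>^2))"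

definition Kfib :: "('a \<Rightarrow> real) set \<Rightarrow> nat \<Rightarrow> (nat \<Rightarrow> 'a) \<Rightarrow> (nat \<Rightarrow> real) \<Rightarrow> ('a \<Rightarrow> real) set" where
  "Kfib K m xs w' = {h\<in>K. \<forall>j<m. lam xs h j = w' j}"

definition Kball :: "('a \<Rightarrow> real) set \<Rightarrow> nat \<Rightarrow> (nat \<Rightarrow> 'a) \<Rightarrow> (nat \<Rightarrow> real) \<Rightarrow> real \<Rightarrow> ('a \<Rightarrow> real) set" where
  "Kball K m xs w e = (\<Union>w'\<in>{w'. vnorm m (\<lambda>j. w' j - w j) \<le> e}. Kfib K m xs w')"

definition chebR :: "('a \<Rightarrow> real) set \<Rightarrow> (('a \<Rightarrow> real) \<Rightarrow> real) \<Rightarrow> ('a \<Rightarrow> real) set \<Rightarrow> ereal" where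
  "chebR X N S = (INF z\<in>X. SUP s\<in>S. enorm X N (\<lambda>x. s x - z x))"

text \<open>dist(A,B) in C(\<Omega>) (one-sided Hausdorff), with inf over empty set = \<infinity>.\<close>
definition distC :: "'a set \<Rightarrow> ('a \<Rightarrow> real) set \<Rightarrow> ('a \<Rightarrow> real) set \<Rightarrow> ereal" where
  "distC \<Omega> A B = (SUP a\<in>A. INF b\<in>B. ereal (cnorm \<Omega> (\<lambda>x. a x - b x)))"

definition Lmu :: "nat \<Rightarrow> (nat \<Rightarrow> 'a) \<Rightarrow> (nat \<Rightarrow> real) \<Rightarrow> ('a \<Rightarrow> real) set \<Rightarrow> (('a \<Rightarrow> real) \<Rightarrow> real)
    \<Rightarrow> real \<Rightarrow> ('a \<Rightarrow> real) \<Rightarrow> ereal" where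
  "Lmu m xs w Y NY \<mu> g = ereal (vnorm m (\<lambda>j. lam xs g j - w j)) + ereal \<mu> * enorm Y NY g"

end

theory Submission
  imports Defs
begin

lemma cnorm_ge: "compact \<Omega> \<Longrightarrow> continuous_on \<Omega> g \<Longrightarrow> x \<in> \<Omega> \<Longrightarrow> \<bar>g x\<bar> \<le> cnorm \<Omega> g"
  unfolding cnorm_def
  by (rule cSUP_upper) (auto intro!: bounded_imp_bdd_above compact_imp_bounded compact_continuous_image continuous_intros)
lemma cnorm_le: "\<Omega> \<noteq> {} \<Longrightarrow> (\<forall>x\<in>\<Omega>. \<bar>g x\<bar> \<le> c) \<Longrightarrow> cnorm \<Omega> g \<le> c"
  unfolding cnorm_def by (simp add: cSUP_least)
lemma vnorm_nonneg: "vnorm m v \<ge> 0"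
  unfolding vnorm_def by (simp add: sum_nonneg)
lemma vnorm_le: assumes "c \<ge> 0" "\<forall>j<m. \<bar>v j\<bar> \<le> c" shows "vnorm m v \<le> c"
proof (cases "m = 0")
  case True then show ?thesis using assms by (simp add: vnorm_def)
next
  case False
  have "\<And>j. j<m \<Longrightarrow> \<bar>v j\<bar>^2 \<le> c^2" using assms by (intro power_mono) auto
  then have "(\<Sum>j<m. \<bar>v j\<bar>^2) \<le> (\<Sum>j<m. c^2)" by (intro sum_mono) simp
  then have "(1 / real m) * (\<Sum>j<m. \<bar>v j\<bar>^2) \<le> c^2" using False by (simp add: field_simps)
  then show ?thesis unfolding vnorm_def using assms(1) by (simp add: real_sqrt_le_iff real_le_lsqrt)
qed
lemma vnorm_L2: "vnorm m v = sqrt (1 / real m) * L2_set v {..<m}"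
  unfolding vnorm_def L2_set_def by (simp add: real_sqrt_mult[symmetric] real_sqrt_divide)
lemma vnorm_tri: "vnorm m (\<lambda>j. u j + v j) \<le> vnorm m u + vnorm m v"
  unfolding vnorm_L2
  using mult_left_mono[OF L2_set_triangle_ineq[of u v "{..<m}"], of "sqrt (1/real m)"]
  by (simp add: distrib_left)

lemma nf_smul: "normed_fspace \<Omega> V N \<Longrightarrow> g \<in> V \<Longrightarrow> (\<lambda>x. c * g x) \<in> V"
  unfolding normed_fspace_def by (elim conjE) (drule spec[of _ c], erule bspec)
lemma nf_add: "normed_fspace \<Omega> V N \<Longrightarrow> g \<in> V \<Longrightarrow> h \<in> V \<Longrightarrow> (\<lambda>x. g x + h x) \<in> V"
  unfolding normed_fspace_def by (elim conjE) (drule bspec, assumption, erule bspec)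
lemma nf_N_smul: "normed_fspace \<Omega> V N \<Longrightarrow> g \<in> V \<Longrightarrow> N (\<lambda>x. c * g x) = \<bar>c\<bar> * N g"
  unfolding normed_fspace_def by (elim conjE) (drule spec[of _ c], erule bspec)
lemma nf_N_add: "normed_fspace \<Omega> V N \<Longrightarrow> g \<in> V \<Longrightarrow> h \<in> V \<Longrightarrow> N (\<lambda>x. g x + h x) \<le> N g + N h"
  unfolding normed_fspace_def by (elim conjE) (drule bspec, assumption, erule bspec)
lemma nf_N_nonneg: "normed_fspace \<Omega> V N \<Longrightarrow> g \<in> V \<Longrightarrow> N g \<ge> 0"
  unfolding normed_fspace_def by (elim conjE) (drule bspec, assumption, erule conjunct1)
lemma nf_N_zero: "normed_fspace \<Omega> V N \<Longrightarrow> g \<in> V \<Longrightarrow> N g = 0 \<Longrightarrow> g = (\<lambda>x. 0)"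
  unfolding normed_fspace_def by (elim conjE) (drule bspec, assumption, simp)

lemma nf_diff: assumes "normed_fspace \<Omega> V N" "g \<in> V" "h \<in> V" shows "(\<lambda>x. g x - h x) \<in> V"
proof -
  have "(\<lambda>x. g x + (\<lambda>x. (-1) * h x) x) \<in> V" by (intro nf_add[OF assms(1,2)] nf_smul[OF assms(1,3)])
  then show ?thesis by simp
qed

lemma nf_sym: assumes "normed_fspace \<Omega> V N" "g \<in> V" "h \<in> V"
  shows "N (\<lambda>x. g x - h x) = N (\<lambda>x. h x - g x)"
proof -
  have "N (\<lambda>x. (-1) * (\<lambda>x. g x - h x) x) = \<bar>-1\<bar> * N (\<lambda>x. g x - h x)"
    by (rule nf_N_smul[OF assms(1) nf_diff[OF assms]])
  then show ?thesis by simp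
qed

lemma nf_tri: assumes "normed_fspace \<Omega> V N" "a \<in> V" "b \<in> V" "c \<in> V"
  shows "N (\<lambda>x. a x - c x) \<le> N (\<lambda>x. a x - b x) + N (\<lambda>x. b x - c x)"
proof -
  have "N (\<lambda>x. (\<lambda>x. a x - b x) x + (\<lambda>x. b x - c x) x) \<le> N (\<lambda>x. a x - b x) + N (\<lambda>x. b x - c x)"
    by (rule nf_N_add[OF assms(1) nf_diff[OF assms(1,2,3)] nf_diff[OF assms(1,3,4)]])
  then show ?thesis by simp
qed

lemma cheb2: assumes V: "normed_fspace \<Omega> V N" and S: "a \<in> S" "b \<in> S" and ab: "a \<in> V" "b \<in> V"
  shows "ereal (N (\<lambda>x. a x - b x)) \<le> 2 * chebR V N S"
proof -
  have "ereal (N (\<lambda>x. a x - b x) / 2) \<le> (SUP s\<in>S. enorm V N (\<lambda>x. s x - z x))" if z: "z \<in> V" for z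
  proof -
    have "N (\<lambda>x. a x - b x) \<le> N (\<lambda>x. a x - z x) + N (\<lambda>x. z x - b x)"
      by (rule nf_tri[OF V ab(1) z ab(2)])
    also have "N (\<lambda>x. z x - b x) = N (\<lambda>x. b x - z x)" by (rule nf_sym[OF V z ab(2)])
    finally have le: "N (\<lambda>x. a x - b x) \<le> N (\<lambda>x. a x - z x) + N (\<lambda>x. b x - z x)" .
    have e1: "ereal (N (\<lambda>x. a x - z x)) \<le> (SUP s\<in>S. enorm V N (\<lambda>x. s x - z x))"
    proof -
      have "ereal (N (\<lambda>x. a x - z x)) = enorm V N (\<lambda>x. a x - z x)"
        using nf_diff[OF V ab(1) z] by (simp add: enorm_def)
      also have "\<dots> \<le> (SUP s\<in>S. enorm V N (\<lambda>x. s x - z x))" using S(1) by (rule SUP_upper)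
      finally show ?thesis .
    qed
    have e2: "ereal (N (\<lambda>x. b x - z x)) \<le> (SUP s\<in>S. enorm V N (\<lambda>x. s x - z x))"
    proof -
      have "ereal (N (\<lambda>x. b x - z x)) = enorm V N (\<lambda>x. b x - z x)"
        using nf_diff[OF V ab(2) z] by (simp add: enorm_def)
      also have "\<dots> \<le> (SUP s\<in>S. enorm V N (\<lambda>x. s x - z x))" using S(2) by (rule SUP_upper)
      finally show ?thesis .
    qed
    show ?thesis
    proof (cases "N (\<lambda>x. a x - z x) \<le> N (\<lambda>x. b x - z x)")
      case True
      then have "N (\<lambda>x. a x - b x) / 2 \<le> N (\<lambda>x. b x - z x)" using le by simp
      then have "ereal (N (\<lambda>x. a x - b x) / 2) \<le> ereal (N (\<lambda>x. b x - z x))" by simp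
      then show ?thesis using e2 by (rule order_trans)
    next
      case False
      then have "N (\<lambda>x. a x - b x) / 2 \<le> N (\<lambda>x. a x - z x)" using le by simp
      then have "ereal (N (\<lambda>x. a x - b x) / 2) \<le> ereal (N (\<lambda>x. a x - z x))" by simp
      then show ?thesis using e1 by (rule order_trans)
    qed
  qed
  then have "ereal (N (\<lambda>x. a x - b x) / 2) \<le> chebR V N S"
    unfolding chebR_def by (rule INF_greatest)
  then have "ereal 2 * ereal (N (\<lambda>x. a x - b x) / 2) \<le> ereal 2 * chebR V N S"
    by (rule ereal_mult_left_mono) simp
  moreover have "ereal 2 * ereal (N (\<lambda>x. a x - b x) / 2) = ereal (N (\<lambda>x. a x - b x))" by simp
  moreover have "ereal 2 = 2" by simp
  ultimately show ?thesis by metis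
qed

theorem theorem4p4:
  fixes \<Omega> :: "'a::euclidean_space set"
    and X Y \<Sigma> :: "('a \<Rightarrow> real) set"
    and NX NY :: "('a \<Rightarrow> real) \<Rightarrow> real"
    and CX CY C \<mu> \<delta> :: real
    and m :: nat and xs :: "nat \<Rightarrow> 'a" and f fhat :: "'a \<Rightarrow> real"
  assumes dom: "\<exists>D. open D \<and> connected D \<and> bounded D \<and> D \<noteq> {} \<and> \<Omega> = closure D"
    and X: "banach_fspace \<Omega> X NX"
    and CX_sub: "Cspace \<Omega> \<subseteq> X"
    and CX_bd: "\<forall>g\<in>Cspace \<Omega>. NX g \<le> CX * cnorm \<Omega> g"
    and Y: "normed_fspace \<Omega> Y NY" and Y_sub: "Y \<subseteq> Cspace \<Omega>"
    and K_cpt: "compact_in_C \<Omega> {g\<in>Y. NY g \<le> 1}"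
    and CY: "\<forall>g\<in>{g\<in>Y. NY g \<le> 1}. cnorm \<Omega> g \<le> CY"
    and xs: "\<forall>j<m. xs j \<in> \<Omega>"
    and f: "f \<in> {g\<in>Y. NY g \<le> 1}"
    and R0: "chebR X NX (Kfib {g\<in>Y. NY g \<le> 1} m xs (lam xs f)) \<noteq> 0"
    and C: "C > 2" and mu: "\<mu> > 0" and delta: "\<delta> > 0" "\<delta> \<le> \<mu>^2"
    and eps: "ereal (CX * (\<mu> * max (\<mu> + 1) CY))
                + 2 * chebR X NX (Kball {g\<in>Y. NY g \<le> 1} m xs (lam xs f) (2 * (\<mu> * max (\<mu> + 1) CY)))
              \<le> ereal C * chebR X NX (Kfib {g\<in>Y. NY g \<le> 1} m xs (lam xs f))"
    and Sigma_sub: "\<Sigma> \<subseteq> Cspace \<Omega>"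
    and Sigma_dist: "distC \<Omega> {g\<in>Y. NY g \<le> 1} (\<Sigma> \<inter> {g\<in>Y. NY g \<le> 1}) < ereal \<delta>"
    and fhat: "fhat \<in> \<Sigma>"
    and fhat_min: "\<forall>g\<in>\<Sigma>. Lmu m xs (lam xs f) Y NY \<mu> fhat \<le> Lmu m xs (lam xs f) Y NY \<mu> g"
  shows "enorm X NX (\<lambda>x. f x - fhat x) \<le> ereal C * chebR X NX (Kfib {g\<in>Y. NY g \<le> 1} m xs (lam xs f))"
  proof -
  define K where "K = {g\<in>Y. NY g \<le> 1}"
  define w where "w = lam xs f"
  define \<epsilon> where "\<epsilon> = \<mu> * max (\<mu> + 1) CY"
  obtain D where D: "bounded D" "D \<noteq> {}" "\<Omega> = closure D" using dom by blast
  have cpt: "compact \<Omega>" using D by (simp add: compact_closure)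
  have ne: "\<Omega> \<noteq> {}" using D by simp
  then obtain x0 where x0: "x0 \<in> \<Omega>" by blast
  have fK: "f \<in> K" using f K_def by simp
  have KC: "\<And>g. g \<in> K \<Longrightarrow> g \<in> Cspace \<Omega>" using Y_sub K_def by auto
  have Cc: "\<And>g. g \<in> Cspace \<Omega> \<Longrightarrow> continuous_on \<Omega> g" by (simp add: Cspace_def)
  have Cdiff: "\<And>g h. g \<in> Cspace \<Omega> \<Longrightarrow> h \<in> Cspace \<Omega> \<Longrightarrow> (\<lambda>x. g x - h x) \<in> Cspace \<Omega>"
    by (auto simp: Cspace_def on_set_def intro: continuous_on_diff)
  have fC: "f \<in> Cspace \<Omega>" using KC fK by blast
  have CY0: "CY \<ge> 0"
  proof -
    have "0 \<le> \<bar>f x0\<bar>" by simp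
    also have "\<dots> \<le> cnorm \<Omega> f" using cnorm_ge[OF cpt Cc[OF fC] x0] .
    also have "\<dots> \<le> CY" using CY f by blast
    finally show ?thesis .
  qed
  have eps_ge1: "\<mu> * CY \<le> \<epsilon>" unfolding \<epsilon>_def using mu by (intro mult_left_mono) auto
  have eps_ge2: "\<mu> * (\<mu> + 1) \<le> \<epsilon>" unfolding \<epsilon>_def using mu by (intro mult_left_mono) auto
  have eps0: "\<epsilon> \<ge> 0" using eps_ge1 mu CY0 by (meson order_trans zero_le_mult_iff less_imp_le)
  have "(INF b\<in>\<Sigma> \<inter> K. ereal (cnorm \<Omega> (\<lambda>x. f x - b x))) \<le> distC \<Omega> K (\<Sigma> \<inter> K)"
    unfolding distC_def using fK by (rule SUP_upper)
  also have "\<dots> < ereal \<delta>" using Sigma_dist K_def by simp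
  finally obtain b where b: "b \<in> \<Sigma>" "b \<in> K" "cnorm \<Omega> (\<lambda>x. f x - b x) < \<delta>"
    by (auto simp: INF_less_iff)
  have bC: "b \<in> Cspace \<Omega>" using KC b by blast
  have vb: "vnorm m (\<lambda>j. lam xs b j - w j) \<le> \<delta>"
  proof (rule vnorm_le)
    show "0 \<le> \<delta>" using delta by simp
    show "\<forall>j<m. \<bar>lam xs b j - w j\<bar> \<le> \<delta>"
    proof (intro allI impI)
      fix j assume "j < m"
      then have "xs j \<in> \<Omega>" using xs by blast
      then have "\<bar>f (xs j) - b (xs j)\<bar> \<le> cnorm \<Omega> (\<lambda>x. f x - b x)"
        using cnorm_ge[OF cpt Cc[OF Cdiff[OF fC bC]]] by simp
      then show "\<bar>lam xs b j - w j\<bar> \<le> \<delta>" using b(3) by (simp add: lam_def w_def)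
    qed
  qed
  have bY: "b \<in> Y" "NY b \<le> 1" using b K_def by auto
  have Lb: "Lmu m xs w Y NY \<mu> b \<le> ereal (\<delta> + \<mu>)"
  proof -
    have "Lmu m xs w Y NY \<mu> b = ereal (vnorm m (\<lambda>j. lam xs b j - w j) + \<mu> * NY b)"
      using bY by (simp add: Lmu_def enorm_def)
    also have "\<dots> \<le> ereal (\<delta> + \<mu>)" using vb bY mu
      by (simp add: add_mono mult_left_le)
    finally show ?thesis .
  qed
  have Lf: "Lmu m xs w Y NY \<mu> fhat \<le> ereal (\<delta> + \<mu>)"
    using fhat_min b(1) Lb unfolding w_def by (meson order_trans)
  have fhY: "fhat \<in> Y"
  proof (rule ccontr)
    assume "fhat \<notin> Y"
    then have "Lmu m xs w Y NY \<mu> fhat = \<infinity>" using mu by (simp add: Lmu_def enorm_def)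
    then show False using Lf by simp
  qed
  define n where "n = NY fhat"
  define vh where "vh = vnorm m (\<lambda>j. lam xs fhat j - w j)"
  have n0: "n \<ge> 0" using nf_N_nonneg[OF Y fhY] n_def by simp
  have vh0: "vh \<ge> 0" using vnorm_nonneg vh_def by simp
  have "ereal (vh + \<mu> * n) \<le> ereal (\<delta> + \<mu>)"
    using Lf fhY by (simp add: Lmu_def enorm_def vh_def n_def)
  then have sum_le: "vh + \<mu> * n \<le> \<mu> * (\<mu> + 1)" using delta by (simp add: power2_eq_square algebra_simps)
  have vh_le: "vh \<le> \<mu> * (\<mu> + 1)" using sum_le mu n0 by (smt (verit) mult_nonneg_nonneg)
  have "\<mu> * n \<le> \<mu> * (\<mu> + 1)" using sum_le vh0 by simp
  then have n_le: "n \<le> \<mu> + 1" using mu by simp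
  have fhC: "fhat \<in> Cspace \<Omega>" using Sigma_sub fhat by blast
  define fh' where "fh' = (if n \<le> 1 then fhat else (\<lambda>x. (1 / n) * fhat x))"
  have fh'K: "fh' \<in> K"
  proof (cases "n \<le> 1")
    case True then show ?thesis using fhY by (simp add: fh'_def K_def n_def)
  next
    case False
    have "fh' \<in> Y" using False nf_smul[OF Y fhY, of "1/n"] by (simp add: fh'_def)
    moreover have "NY fh' = 1" using False nf_N_smul[OF Y fhY, of "1/n"] by (simp add: fh'_def n_def)
    ultimately show ?thesis by (simp add: K_def)
  qed
  have fh'C: "fh' \<in> Cspace \<Omega>" using KC fh'K by blast
  have diff_bd: "\<bar>fhat x - fh' x\<bar> \<le> \<mu> * CY" if x: "x \<in> \<Omega>" for x
  proof (cases "n \<le> 1")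
    case True then show ?thesis using mu CY0 by (simp add: fh'_def)
  next
    case False
    have eq: "fhat x - fh' x = (n - 1) * fh' x" using False by (simp add: fh'_def field_simps)
    have "\<bar>fh' x\<bar> \<le> cnorm \<Omega> fh'" using cnorm_ge[OF cpt Cc[OF fh'C] x] .
    also have "\<dots> \<le> CY" using CY fh'K K_def by blast
    finally have a: "\<bar>fh' x\<bar> \<le> CY" .
    have "\<bar>fhat x - fh' x\<bar> = (n - 1) * \<bar>fh' x\<bar>" using eq False by (simp add: abs_mult)
    also have "\<dots> \<le> \<mu> * CY" using a n_le False CY0 by (intro mult_mono) auto
    finally show ?thesis .
  qed
  have dC: "(\<lambda>x. fhat x - fh' x) \<in> Cspace \<Omega>" using Cdiff[OF fhC fh'C] .
  have cn: "cnorm \<Omega> (\<lambda>x. fhat x - fh' x) \<le> \<epsilon>"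
    using cnorm_le[OF ne] diff_bd eps_ge1 by (meson order_trans)
  define g1 where "g1 = (\<lambda>x. if x \<in> \<Omega> then (1::real) else 0)"
  have g1C: "g1 \<in> Cspace \<Omega>"
  proof -
    have "continuous_on \<Omega> g1"
      by (rule continuous_on_cong[THEN iffD1, OF refl _ continuous_on_const[of \<Omega> 1]]) (simp add: g1_def)
    then show ?thesis by (simp add: Cspace_def on_set_def g1_def)
  qed
  have CX0: "CX \<ge> 0"
  proof (rule ccontr)
    assume "\<not> CX \<ge> 0"
    have "1 \<le> cnorm \<Omega> g1" using cnorm_ge[OF cpt Cc[OF g1C] x0] by (simp add: g1_def x0)
    then have "CX * cnorm \<Omega> g1 < 0" using \<open>\<not> CX \<ge> 0\<close> by (simp add: mult_neg_pos)
    then have "NX g1 < 0" using CX_bd g1C by (meson le_less_trans)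
    then show False using nf_N_nonneg[OF _ CX_sub[THEN subsetD, OF g1C]] X banach_fspace_def by fastforce
  qed
  have NXd: "NX (\<lambda>x. fhat x - fh' x) \<le> CX * \<epsilon>"
    using CX_bd dC cn CX0 by (meson mult_left_mono order_trans)
  define S where "S = Kball K m xs w (2 * \<epsilon>)"
  have fS: "f \<in> S"
    unfolding S_def Kball_def Kfib_def using fK eps0 by (auto simp: vnorm_def w_def intro!: exI[of _ w])
  have fh'S: "fh' \<in> S"
  proof -
    have v1: "vnorm m (\<lambda>j. lam xs fh' j - lam xs fhat j) \<le> \<epsilon>"
    proof (rule vnorm_le)
      show "0 \<le> \<epsilon>" by (rule eps0)
      show "\<forall>j<m. \<bar>lam xs fh' j - lam xs fhat j\<bar> \<le> \<epsilon>"
      proof (intro allI impI)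
        fix j assume "j < m"
        then have "xs j \<in> \<Omega>" using xs by blast
        then have "\<bar>fhat (xs j) - fh' (xs j)\<bar> \<le> \<mu> * CY" by (rule diff_bd)
        then show "\<bar>lam xs fh' j - lam xs fhat j\<bar> \<le> \<epsilon>" using eps_ge1 by (simp add: lam_def)
      qed
    qed
    have "vnorm m (\<lambda>j. lam xs fh' j - w j)
        = vnorm m (\<lambda>j. (lam xs fh' j - lam xs fhat j) + (lam xs fhat j - w j))" by simp
    also have "\<dots> \<le> vnorm m (\<lambda>j. lam xs fh' j - lam xs fhat j) + vh"
      unfolding vh_def by (rule vnorm_tri)
    also have "\<dots> \<le> 2 * \<epsilon>" using v1 vh_le eps_ge2 by simp
    finally have "vnorm m (\<lambda>j. lam xs fh' j - w j) \<le> 2 * \<epsilon>" .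
    then show ?thesis unfolding S_def Kball_def Kfib_def using fh'K
      by (auto intro!: exI[of _ "lam xs fh'"])
  qed
  have XX: "normed_fspace \<Omega> X NX" using X banach_fspace_def by blast
  have fX: "f \<in> X" using CX_sub fC by blast
  have fh'X: "fh' \<in> X" using CX_sub fh'C by blast
  have fhX: "fhat \<in> X" using CX_sub fhC by blast
  have ch: "ereal (NX (\<lambda>x. f x - fh' x)) \<le> 2 * chebR X NX S"
    by (rule cheb2[OF XX fS fh'S fX fh'X])
  have "NX (\<lambda>x. f x - fhat x) \<le> NX (\<lambda>x. f x - fh' x) + NX (\<lambda>x. fh' x - fhat x)"
    by (rule nf_tri[OF XX fX fh'X fhX])
  also have "NX (\<lambda>x. fh' x - fhat x) = NX (\<lambda>x. fhat x - fh' x)" by (rule nf_sym[OF XX fh'X fhX])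
  finally have t: "NX (\<lambda>x. f x - fhat x) \<le> NX (\<lambda>x. f x - fh' x) + CX * \<epsilon>" using NXd by simp
  have "enorm X NX (\<lambda>x. f x - fhat x) = ereal (NX (\<lambda>x. f x - fhat x))"
    using nf_diff[OF XX fX fhX] by (simp add: enorm_def)
  also have "\<dots> \<le> ereal (NX (\<lambda>x. f x - fh' x)) + ereal (CX * \<epsilon>)" using t by simp
  also have "\<dots> \<le> 2 * chebR X NX S + ereal (CX * \<epsilon>)" using ch by (rule add_right_mono)
  also have "\<dots> = ereal (CX * \<epsilon>) + 2 * chebR X NX S" by (simp add: add.commute)
  also have "\<dots> \<le> ereal C * chebR X NX (Kfib {g\<in>Y. NY g \<le> 1} m xs (lam xs f))"
    using eps unfolding S_def K_def w_def \<epsilon>_def by simp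
  finally show ?thesis .
qed

end
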